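(* Assume all of the following: - Assumption 1 holds: (i) $\{Y(0),Y(1)\}\perp\!\!\!\perp A\mid X$; (ii) $\epsilon<\mathbb{P}(A=1\mid X=x)<1-\epsilon$ for all $x\in\mathcal X$, for some constant $0<\epsilon<1/2$. - Condition 1 holds: (i) $\Psi(\beta)$ is continuously differentiable in $\beta$ on a neighborhood of $\beta^\dagger$; (ii) $\beta$ ranges over $[0,M]$ for a finite constant $M$, and $\beta^\dagger$ is an interior point of $[0,M]$; (iii) $|\partial\Psi(\beta^\dagger)/\partial\beta|\ge c>0$ for some constant $c$. - Condition 2 holds: for every $\beta$, the random variable $\tau(X)-\beta\,\mathrm{THR}_U(X)$ has a bounded density. - The estimators are uniformly consistent: for each $k$, $\sup_x|\hat\tau^{(-k)}(x)-\tau(x)|\xrightarrow{\mathbb P}0$ and $\sup_x|\widehat{\mathrm{THR}}_U^{(-k)}(x)-\mathrm{THR}_U(x)|\xrightarrow{\mathbb P}0$. Then $\hat\beta^{(k)}\xrightarrow{\mathbb P}\beta^\dagger$.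
   Context: Setting. Tuples $\{X,A,Y(1),Y(0)\}$ are drawn from a superpopulation. $X\in\mathcal X$ are covariates, $A\in\{0,1\}$ is a treatment, and $Y(a)\in\{0,1\}$ are potential outcomes. The observed outcome is $Y=AY(1)+(1-A)Y(0)$. We observe an i.i.d. sample $\{(X_i,A_i,Y_i)\}_{i=1}^N$. Notation: - $\mu_a(x)=\mathbb{E}(Y\mid A=a,X=x)$ for $a=0,1$. - $\tau(x)=\mathbb{E}\{Y(1)-Y(0)\mid X=x\}$, which equals $\mu_1(x)-\mu_0(x)$ under Assumption 1. - $\mathrm{THR}_U(x)=\min\{\mu_0(x),1-\mu_1(x)\}$. - $\lambda$ is a fixed threshold. - $\Psi(\beta)=\mathbb{E}[\mathrm{THR}_U(X)\,\mathbb{I}\{\tau(X)-\beta\,\mathrm{THR}_U(X)>0\}]-\lambda$. - $\beta^\dagger$ is the solution of $\Psi(\beta)=0$. Estimation procedure. - Partition $\{1,\dots,N\}$ at random into $K$ index sets $\mathcal I_1,\dots,\mathcal I_K$, each of size $N/K$, where $K$ is fixed. Let $\mathcal I_k^c$ be the complement of $\mathcal I_k$. - For each $k$, let $\hat\tau^{(-k)}$ and $\widehat{\mathrm{THR}}_U^{(-k)}$ be estimators of $\tau$ and $\mathrm{THR}_U$ computed only from the observations indexed by $\mathcal I_k^c$. - Let $\hat\beta^{(k)}\in[0,M]$ be a solution in $\beta$ of $$\frac{1}{|\mathcal I_k|}\sum_{i\in\mathcal I_k}\widehat{\mathrm{THR}}_U^{(-k)}(X_i)\,\mathbb{I}\{\hat\tau^{(-k)}(X_i)-\beta\,\widehat{\mathrm{THR}}_U^{(-k)}(X_i)>0\}-\lambda=0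 .$$ *)

theory Defs
  imports "HOL-Probability.Probability"
begin

definition gen_sigma :: "'w measure \<Rightarrow> ('w \<Rightarrow> 'c) \<Rightarrow> 'c measure \<Rightarrow> 'w measure" where
  "gen_sigma M W MW = vimage_algebra (space M) W MW"

definition cond_indep ::
  "'w measure \<Rightarrow> ('w \<Rightarrow> 'a) \<Rightarrow> 'a measure \<Rightarrow> ('w \<Rightarrow> 'b) \<Rightarrow> 'b measure
     \<Rightarrow> ('w \<Rightarrow> 'c) \<Rightarrow> 'c measure \<Rightarrow> bool" where
  "cond_indep M U MU V MV W MW \<longleftrightarrow>
     (\<forall>B\<in>sets MU. \<forall>C\<in>sets MV. AE \<omega> in M.
        real_cond_exp M (gen_sigma M W MW) (indicator {\<omega>. U \<omega> \<in> B \<and> V \<omega> \<in> C}) \<omega> =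
        real_cond_exp M (gen_sigma M W MW) (indicator {\<omega>. U \<omega> \<in> B}) \<omega> *
        real_cond_exp M (gen_sigma M W MW) (indicator {\<omega>. V \<omega> \<in> C}) \<omega>)"

(* m is a version of x \<mapsto> E(Yv | Av = a, Xv = x), i.e.
   E(Yv 1{Av=a} | Xv) = m(Xv) P(Av = a | Xv)  a.s. *)
definition is_cond_mean :: "'w measure \<Rightarrow> 'x measure \<Rightarrow> ('w \<Rightarrow> 'x) \<Rightarrow> ('w \<Rightarrow> real)
     \<Rightarrow> ('w \<Rightarrow> real) \<Rightarrow> real \<Rightarrow> ('x \<Rightarrow> real) \<Rightarrow> bool" where
  "is_cond_mean M SX Xv Av Yv a m \<longleftrightarrow>
     m \<in> borel_measurable SX \<and>
     (AE \<omega> in M. real_cond_exp M (gen_sigma M Xv SX)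
                    (\<lambda>\<omega>. Yv \<omega> * indicator {\<omega>. Av \<omega> = a} \<omega>) \<omega>
                 = m (Xv \<omega>) * real_cond_exp M (gen_sigma M Xv SX) (indicator {\<omega>. Av \<omega> = a}) \<omega>)"

definition THR_U :: "('x \<Rightarrow> real) \<Rightarrow> ('x \<Rightarrow> real) \<Rightarrow> 'x \<Rightarrow> real" where
  "THR_U mu0 mu1 x = min (mu0 x) (1 - mu1 x)"

definition Psi :: "'w measure \<Rightarrow> ('w \<Rightarrow> 'x) \<Rightarrow> ('x \<Rightarrow> real) \<Rightarrow> ('x \<Rightarrow> real)
     \<Rightarrow> real \<Rightarrow> real \<Rightarrow> real" where
  "Psi M Xv tau thr lam \<beta> =
     (\<integral>\<omega>. thr (Xv \<omega>) * (if tau (Xv \<omega>) - \<beta> * thr (Xv \<omega>) > 0 then 1 else 0) \<partial>M) - lam"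

definition outer_prob_to_zero :: "'w measure \<Rightarrow> (nat \<Rightarrow> 'w set) \<Rightarrow> bool" where
  "outer_prob_to_zero M S \<longleftrightarrow>
     (\<forall>\<eta>>0. eventually (\<lambda>n. \<exists>E\<in>sets M. S n \<inter> space M \<subseteq> E \<and> measure M E < \<eta>) sequentially)"

end

theory Submission
  imports Defs
begin


lemma deriv_sign:
  fixes f :: "real \<Rightarrow> real"
  assumes mono: "\<And>x y. x \<le> y \<Longrightarrow> f y \<le> f x"
    and der: "(f has_real_derivative l) (at x)" and c: "c > 0" "\<bar>l\<bar> \<ge> c"
  shows "\<exists>d>0. \<forall>h>0. h < d \<longrightarrow> f (x + h) < f x \<and> f x < f (x - h)"
proof -
  have "l < 0"
  proof (rule ccontr)
    assume "\<not> l < 0"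
    then have "l > 0" using c by auto
    from DERIV_pos_inc_right[OF der this] obtain d where "d > 0" "\<forall>h>0. h < d \<longrightarrow> f x < f (x + h)" by auto
    then have "f x < f (x + d/2)" using \<open>d>0\<close> by simp
    moreover have "f (x + d/2) \<le> f x" by (rule mono) (use \<open>d>0\<close> in simp)
    ultimately show False by simp
  qed
  from DERIV_neg_dec_right[OF der this] obtain d1 where d1: "d1 > 0" "\<forall>h>0. h < d1 \<longrightarrow> f x > f (x + h)" by auto
  from DERIV_neg_dec_left[OF der \<open>l<0\<close>] obtain d2 where d2: "d2 > 0" "\<forall>h>0. h < d2 \<longrightarrow> f x < f (x - h)" by auto
  show ?thesis
  proof (intro exI[of _ "min d1 d2"] conjI allI impI)
    show "min d1 d2 > 0" using d1 d2 by simp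
    fix h :: real assume "h > 0" "h < min d1 d2"
    then show "f (x + h) < f x" "f x < f (x - h)" using d1(2) d2(2) by simp_all
  qed
qed



lemma hoeff_wlln:
  fixes M :: "'w measure" and SX :: "'x measure" and Z :: "nat \<Rightarrow> 'w \<Rightarrow> 'x"
  assumes P: "prob_space M"
    and Zm: "\<And>i. Z i \<in> measurable M SX"
    and ind: "prob_space.indep_vars M (\<lambda>_. SX) Z UNIV"
    and idd: "\<And>i. distr M SX (Z i) = distr M SX (Z 0)"
    and gm: "g \<in> borel_measurable SX" and gb: "\<And>x. x \<in> space SX \<Longrightarrow> g x \<in> {0..1}"
    and J: "\<And>n. n \<ge> 1 \<Longrightarrow> card (J n) = n"
    and al: "\<alpha> > 0" and ga: "\<gamma> > 0"
  shows "eventually (\<lambda>n. measure M {\<omega>\<in>space M. (\<Sum>i\<in>J n. g (Z i \<omega>)) / real n \<ge> (\<integral>\<omega>. g (Z 0 \<omega>) \<partial>M) + \<alpha>} < \<gamma>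
              \<and> measure M {\<omega>\<in>space M. (\<Sum>i\<in>J n. g (Z i \<omega>)) / real n \<le> (\<integral>\<omega>. g (Z 0 \<omega>) \<partial>M) - \<alpha>} < \<gamma>) sequentially"
proof -
  interpret prob_space M by (rule P)
  define N :: nat where "N = nat \<lceil>- ln \<gamma> / (2 * \<alpha>\<^sup>2)\<rceil> + 1"
  show ?thesis
  proof (rule eventually_sequentiallyI[of N])
    fix n assume nN: "N \<le> n"
    then have n1: "n \<ge> 1" unfolding N_def by auto
    have cJ: "card (J n) = n" using J[OF n1] .
    have fin: "finite (J n)" using cJ n1 by (metis card.infinite not_one_le_zero)
    have ne: "J n \<noteq> {}" using cJ n1 by auto
    have gZm: "(\<lambda>\<omega>. g (Z i \<omega>)) \<in> borel_measurable M" for i using measurable_compose[OF Zm gm] by (simp add: comp_def)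
    interpret H: Hoeffding_ineq_iid M "J n" "\<lambda>i \<omega>. g (Z i \<omega>)" "\<lambda>\<omega>. g (Z 0 \<omega>)" 0 1
      "\<integral>\<omega>. g (Z 0 \<omega>) \<partial>M"
    proof unfold_locales
      show "finite (J n)" by (rule fin)
      show "indep_vars (\<lambda>_. borel) (\<lambda>i \<omega>. g (Z i \<omega>)) (J n)"
        using indep_vars_compose2[OF indep_vars_subset[OF ind subset_UNIV], where Y="\<lambda>_. g" and N="\<lambda>_. borel"] gm by auto
      show "distr M borel (\<lambda>\<omega>. g (Z i \<omega>)) = distr M borel (\<lambda>\<omega>. g (Z 0 \<omega>))" if "i \<in> J n" for i
      proof -
        have "distr M borel (\<lambda>\<omega>. g (Z i \<omega>)) = distr (distr M SX (Z i)) borel g"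
          using distr_distr[OF gm Zm] by (simp add: comp_def)
        also have "\<dots> = distr (distr M SX (Z 0)) borel g" by (simp only: idd[of i])
        also have "\<dots> = distr M borel (\<lambda>\<omega>. g (Z 0 \<omega>))"
          using distr_distr[OF gm Zm] by (simp add: comp_def)
        finally show ?thesis .
      qed
      show "random_variable borel (\<lambda>\<omega>. g (Z 0 \<omega>))" by (rule gZm)
      show "AE x in M. g (Z 0 x) \<in> {0..1}"
        using gb measurable_space[OF Zm[of 0]] by (intro AE_I2) auto
    qed simp
    have nge: "real n \<ge> - ln \<gamma> / (2 * \<alpha>\<^sup>2) + 1"
    proof -
      have "real n \<ge> real N" using nN by simp
      moreover have "real N \<ge> - ln \<gamma> / (2 * \<alpha>\<^sup>2) + 1" unfolding N_def
        using real_nat_ceiling_ge[of "- ln \<gamma> / (2 * \<alpha>\<^sup>2)"] by simp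
      ultimately show ?thesis by linarith
    qed
    have bound: "exp (- 2 * real n * \<alpha>\<^sup>2 / (1 - 0)\<^sup>2) < \<gamma>"
    proof -
      have a2: "2 * \<alpha>\<^sup>2 > 0" using al by simp
      have "real n * (2 * \<alpha>\<^sup>2) > - ln \<gamma>"
      proof -
        have "real n > - ln \<gamma> / (2 * \<alpha>\<^sup>2)" using nge by linarith
        then have "- ln \<gamma> / (2 * \<alpha>\<^sup>2) < real n" by simp
        then show ?thesis using a2 by (simp only: divide_less_eq)
      qed
      then have "- 2 * real n * \<alpha>\<^sup>2 < ln \<gamma>" by (simp add: algebra_simps)
      then have "exp (- 2 * real n * \<alpha>\<^sup>2) < exp (ln \<gamma>)" by simp
      then show ?thesis using ga by simp
    qed
    have "measure M {\<omega>\<in>space M. (\<Sum>i\<in>J n. g (Z i \<omega>)) / real (card (J n)) \<ge> (\<integral>\<omega>. g (Z 0 \<omega>) \<partial>M) + \<alpha>}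
           \<le> exp (- 2 * real (card (J n)) * \<alpha>\<^sup>2 / (1 - 0)\<^sup>2)"
      using H.Hoeffding_ineq_ge'[of \<alpha>] al ne by simp
    moreover have "measure M {\<omega>\<in>space M. (\<Sum>i\<in>J n. g (Z i \<omega>)) / real (card (J n)) \<le> (\<integral>\<omega>. g (Z 0 \<omega>) \<partial>M) - \<alpha>}
           \<le> exp (- 2 * real (card (J n)) * \<alpha>\<^sup>2 / (1 - 0)\<^sup>2)"
      using H.Hoeffding_ineq_le'[of \<alpha>] al ne by simp
    ultimately show "measure M {\<omega>\<in>space M. (\<Sum>i\<in>J n. g (Z i \<omega>)) / real n \<ge> (\<integral>\<omega>. g (Z 0 \<omega>) \<partial>M) + \<alpha>} < \<gamma>
              \<and> measure M {\<omega>\<in>space M. (\<Sum>i\<in>J n. g (Z i \<omega>)) / real n \<le> (\<integral>\<omega>. g (Z 0 \<omega>) \<partial>M) - \<alpha>} < \<gamma>"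
      using bound cJ by simp
  qed
qed



lemma cond_mean_01:
  fixes M :: "'w measure" and SX :: "'x measure" and A0 Yv :: "'w \<Rightarrow> real" and X0 :: "'w \<Rightarrow> 'x"
    and a :: real and m :: "'x \<Rightarrow> real"
  assumes P: "prob_space M"
    and Xm: "X0 \<in> measurable M SX" and Am: "A0 \<in> borel_measurable M" and Ym: "Yv \<in> borel_measurable M"
    and bin: "\<And>\<omega>. \<omega> \<in> space M \<Longrightarrow> A0 \<omega> \<in> {0,1} \<and> Yv \<omega> \<in> {0,1}"
    and cm: "is_cond_mean M SX X0 A0 Yv a m" and a: "a \<in> {0,1}"
    and eps: "eps > 0" "eps < 1/2"
    and e: "\<exists>e. e \<in> borel_measurable SX \<and>
         (AE \<omega> in M. real_cond_exp M (gen_sigma M X0 SX) (indicator {\<omega>. A0 \<omega> = 1}) \<omega> = e (X0 \<omega>)) \<and>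
         (\<forall>x\<in>space SX. eps < e x \<and> e x < 1 - eps)"
  shows "AE \<omega> in M. m (X0 \<omega>) \<in> {0..1}"
proof -
  interpret prob_space M by (rule P)
  define F where "F = gen_sigma M X0 SX"
  have sub: "subalgebra M F"
    unfolding subalgebra_def F_def gen_sigma_def
    using sets_image_in_sets[OF _ Xm] by simp
  interpret S: finite_measure_subalgebra M F
    by unfold_locales (rule sub)
  obtain e where em: "e \<in> borel_measurable SX"
    and eAE: "AE \<omega> in M. real_cond_exp M F (indicator {\<omega>. A0 \<omega> = 1}) \<omega> = e (X0 \<omega>)"
    and eb: "\<forall>x\<in>space SX. eps < e x \<and> e x < 1 - eps"
    using e unfolding F_def by blast
  have indm: "indicator {\<omega>. A0 \<omega> = b} \<in> borel_measurable M" for b :: real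
  proof -
    have eq: "(indicator {\<omega>. A0 \<omega> = b} :: 'w \<Rightarrow> real) = (\<lambda>\<omega>. if A0 \<omega> = b then 1 else 0)"
      by (rule ext) (simp add: indicator_def)
    show ?thesis unfolding eq using Am by measurable
  qed
  have indi: "integrable M (indicator {\<omega>. A0 \<omega> = b} :: 'w \<Rightarrow> real)" for b :: real
    by (rule integrable_const_bound[where B=1, OF AE_I2 indm]) (simp add: indicator_def)
  have yim: "(\<lambda>\<omega>. Yv \<omega> * indicator {\<omega>. A0 \<omega> = a} \<omega>) \<in> borel_measurable M"
    using Ym indm[of a] by (intro borel_measurable_times) auto
  have yii: "integrable M (\<lambda>\<omega>. Yv \<omega> * indicator {\<omega>. A0 \<omega> = a} \<omega>)"
  proof (rule integrable_const_bound[where B=1])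
    show "AE x in M. norm (Yv x * indicator {\<omega>. A0 \<omega> = a} x) \<le> 1"
    proof (rule AE_I2)
      fix x assume "x \<in> space M"
      then have "Yv x \<in> {0,1}" using bin by blast
      then show "norm (Yv x * indicator {\<omega>. A0 \<omega> = a} x) \<le> 1" by (auto simp: indicator_def)
    qed
  qed (rule yim)
  define p where "p = real_cond_exp M F (indicator {\<omega>. A0 \<omega> = a})"
  define cc where "cc = real_cond_exp M F (\<lambda>\<omega>. Yv \<omega> * indicator {\<omega>. A0 \<omega> = a} \<omega>)"
  have cmAE: "AE \<omega> in M. cc \<omega> = m (X0 \<omega>) * p \<omega>"
    using cm unfolding is_cond_mean_def cc_def p_def F_def by blast
  have c0: "AE \<omega> in M. cc \<omega> \<ge> 0"
    unfolding cc_def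
  proof (rule S.real_cond_exp_pos[OF AE_I2 yim])
    fix x assume "x \<in> space M"
    then have "Yv x \<in> {0,1}" using bin by blast
    then show "0 \<le> Yv x * indicator {\<omega>. A0 \<omega> = a} x" by (auto simp: indicator_def)
  qed
  have c1: "AE \<omega> in M. cc \<omega> \<le> p \<omega>"
    unfolding cc_def p_def
  proof (rule S.real_cond_exp_mono[OF AE_I2 yii indi])
    fix x assume "x \<in> space M"
    then have "Yv x \<in> {0,1}" using bin by blast
    then show "Yv x * indicator {\<omega>. A0 \<omega> = a} x \<le> indicator {\<omega>. A0 \<omega> = a} x" by (auto simp: indicator_def)
  qed
  have ppos: "AE \<omega> in M. p \<omega> > 0"
  proof (cases "a = 1")
    case True
    have "AE \<omega> in M. p \<omega> = e (X0 \<omega>)" using eAE unfolding p_def True .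
    then show ?thesis
    proof (rule AE_mp[OF _ AE_I2], intro impI)
      fix \<omega> assume "\<omega> \<in> space M" "p \<omega> = e (X0 \<omega>)"
      have "X0 \<omega> \<in> space SX" using measurable_space[OF Xm] \<open>\<omega> \<in> space M\<close> by blast
      then have "eps < e (X0 \<omega>) \<and> e (X0 \<omega>) < 1 - eps" using eb by blast
      then show "p \<omega> > 0" using eps \<open>p \<omega> = _\<close> by simp
    qed
  next
    case False
    then have a0: "a = 0" using a by auto
    have eq: "AE \<omega> in M. indicator {\<omega>. A0 \<omega> = 0} \<omega> = (\<lambda>\<omega>. (1::real) - indicator {\<omega>. A0 \<omega> = 1} \<omega>) \<omega>"
    proof (rule AE_I2)
      fix x assume "x \<in> space M"
      then have "A0 x \<in> {0,1}" using bin by blast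
      then show "indicator {\<omega>. A0 \<omega> = 0} x = (\<lambda>\<omega>. (1::real) - indicator {\<omega>. A0 \<omega> = 1} \<omega>) x" by (auto simp: indicator_def)
    qed
    have "AE \<omega> in M. real_cond_exp M F (indicator {\<omega>. A0 \<omega> = 0}) \<omega>
            = real_cond_exp M F (\<lambda>\<omega>. (1::real) - indicator {\<omega>. A0 \<omega> = 1} \<omega>) \<omega>"
      by (rule S.real_cond_exp_cong[OF eq indm borel_measurable_diff[OF borel_measurable_const indm]])
    moreover have "AE \<omega> in M. real_cond_exp M F (\<lambda>\<omega>. (1::real) - indicator {\<omega>. A0 \<omega> = 1} \<omega>) \<omega>
            = real_cond_exp M F (\<lambda>_. 1) \<omega> - real_cond_exp M F (indicator {\<omega>. A0 \<omega> = 1}) \<omega>"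
      by (rule S.real_cond_exp_diff) (auto simp: indi)
    moreover have "AE \<omega> in M. real_cond_exp M F (\<lambda>_. 1) \<omega> = (1::real)"
      by (rule S.real_cond_exp_F_meas) auto
    ultimately have "AE \<omega> in M. p \<omega> = 1 - e (X0 \<omega>)"
      using eAE unfolding p_def a0 by eventually_elim auto
    then show ?thesis
    proof (rule AE_mp[OF _ AE_I2], intro impI)
      fix \<omega> assume "\<omega> \<in> space M" "p \<omega> = 1 - e (X0 \<omega>)"
      have "X0 \<omega> \<in> space SX" using measurable_space[OF Xm] \<open>\<omega> \<in> space M\<close> by blast
      then have "eps < e (X0 \<omega>) \<and> e (X0 \<omega>) < 1 - eps" using eb by blast
      then show "p \<omega> > 0" using eps \<open>p \<omega> = _\<close> by simp
    qed
  qed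
  from cmAE c0 c1 ppos show ?thesis
  proof eventually_elim
    case (elim \<omega>)
    have "0 \<le> m (X0 \<omega>) * p \<omega>" using elim by simp
    then have g0: "0 \<le> m (X0 \<omega>)" using elim(4) by (simp add: zero_le_mult_iff)
    have "m (X0 \<omega>) * p \<omega> \<le> 1 * p \<omega>" using elim by simp
    then have "m (X0 \<omega>) \<le> 1" using elim(4) by (simp only: mult_le_cancel_right)
    with g0 show ?case by simp
  qed
qed



lemma density_interval_bound:
  fixes M :: "'w measure" and Z :: "'w \<Rightarrow> real"
  assumes P: "prob_space M" and dist: "distributed M lborel Z f" and fB: "\<forall>t. f t \<le> ennreal B"
    and r: "r1 \<le> r2"
  shows "measure M {\<omega>\<in>space M. r1 < Z \<omega> \<and> Z \<omega> \<le> r2} \<le> max B 0 * (r2 - r1)"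
proof -
  interpret prob_space M by (rule P)
  have dd: "distr M lborel Z = density lborel f" and fm: "f \<in> borel_measurable lborel"
    and Zm: "Z \<in> measurable M lborel"
    using dist unfolding distributed_def by auto
  have seteq: "{\<omega>\<in>space M. r1 < Z \<omega> \<and> Z \<omega> \<le> r2} = Z -` {r1<..r2} \<inter> space M" by auto
  have "emeasure M (Z -` {r1<..r2} \<inter> space M) = emeasure (distr M lborel Z) {r1<..r2}"
    by (rule emeasure_distr[symmetric]) (use Zm in auto)
  also have "\<dots> = (\<integral>\<^sup>+ x. f x * indicator {r1<..r2} x \<partial>lborel)"
    unfolding dd by (rule emeasure_density[OF fm]) simp
  also have "\<dots> \<le> (\<integral>\<^sup>+ x. ennreal (max B 0) * indicator {r1<..r2} x \<partial>lborel)"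
  proof (rule nn_integral_mono)
    fix x
    have "f x \<le> ennreal (max B 0)" using fB by (metis ennreal_leI max.cobounded1 order_trans)
    then show "f x * indicator {r1<..r2} x \<le> ennreal (max B 0) * indicator {r1<..r2} x"
      by (auto simp: indicator_def)
  qed
  also have "\<dots> = ennreal (max B 0) * ennreal (r2 - r1)"
    using r by (subst nn_integral_cmult_indicator) auto
  also have "\<dots> = ennreal (max B 0 * (r2 - r1))"
    using r by (simp add: ennreal_mult)
  finally have "ennreal (measure M {\<omega>\<in>space M. r1 < Z \<omega> \<and> Z \<omega> \<le> r2}) \<le> ennreal (max B 0 * (r2 - r1))"
    unfolding seteq by (simp add: emeasure_eq_measure)
  then show ?thesis using r by (simp add: ennreal_le_iff)
qed

lemma term_upper:
  fixes ta tau th t beta beta1 eta Mb :: real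
  assumes "\<bar>ta - tau\<bar> \<le> eta" "\<bar>th - t\<bar> \<le> eta" "0 \<le> t" "0 \<le> beta1" "beta1 \<le> beta" "beta \<le> Mb"
  shows "th * (if ta - beta * th > 0 then 1 else 0) \<le> t * (if tau - beta1 * t > - (eta * (1 + Mb)) then 1 else 0) + eta"
proof (cases "ta - beta * th > 0")
  case True
  have b0: "0 \<le> beta" using assms by linarith
  have "beta * (t - th) \<le> beta * eta" using assms b0 by (intro mult_left_mono) auto
  also have "\<dots> \<le> Mb * eta" using assms b0 by (intro mult_right_mono) auto
  finally have 1: "beta * t \<le> beta * th + Mb * eta" by (simp add: algebra_simps)
  have 2: "beta1 * t \<le> beta * t" using assms by (intro mult_right_mono) auto
  have "tau - beta1 * t > - (eta * (1 + Mb))" using True 1 2 assms(1) by (simp add: abs_le_iff algebra_simps)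
  then show ?thesis using True assms(2) by (simp add: abs_le_iff)
next
  case False
  have "0 \<le> eta" using assms(1) by simp
  then show ?thesis using False assms(3) by simp
qed

lemma term_lower:
  fixes ta tau th t beta beta1 eta Mb :: real
  assumes "\<bar>ta - tau\<bar> \<le> eta" "\<bar>th - t\<bar> \<le> eta" "0 \<le> t" "0 \<le> beta" "beta \<le> beta1" "beta \<le> Mb"
  shows "t * (if tau - beta1 * t > eta * (1 + Mb) then 1 else 0) - eta \<le> th * (if ta - beta * th > 0 then 1 else 0)"
proof (cases "tau - beta1 * t > eta * (1 + Mb)")
  case True
  have "beta * (th - t) \<le> beta * eta" using assms by (intro mult_left_mono) auto
  also have "\<dots> \<le> Mb * eta" using assms by (intro mult_right_mono) auto
  finally have 1: "beta * th \<le> beta * t + Mb * eta" by (simp add: algebra_simps)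
  have 2: "beta * t \<le> beta1 * t" using assms by (intro mult_right_mono) auto
  have "ta - beta * th > 0" using True 1 2 assms(1) by (simp add: abs_le_iff algebra_simps)
  then show ?thesis using True assms(2) by (simp add: abs_le_iff)
next
  case False
  have e0: "0 \<le> eta" using assms(1) by simp
  show ?thesis
  proof (cases "ta - beta * th > 0")
    case True
    then show ?thesis using False assms(2,3) by (simp add: abs_le_iff)
  qed (use False e0 in simp)
qed


theorem lemma1:
  fixes M :: "'w measure" and SX :: "'x measure"
    and X :: "nat \<Rightarrow> 'w \<Rightarrow> 'x" and A Y0 Y1 :: "nat \<Rightarrow> 'w \<Rightarrow> real"
    and mu0 mu1 :: "'x \<Rightarrow> real"
    and K :: nat and I :: "nat \<Rightarrow> nat \<Rightarrow> nat set"
    and tauh thrh :: "nat \<Rightarrow> nat \<Rightarrow> (nat \<Rightarrow> 'x \<times> real \<times> real) \<Rightarrow> 'x \<Rightarrow> real"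
    and betah :: "nat \<Rightarrow> nat \<Rightarrow> 'w \<Rightarrow> real"
    and lam eps Mb c betad :: real and k :: nat
  defines "Yobs \<equiv> \<lambda>i \<omega>. A i \<omega> * Y1 i \<omega> + (1 - A i \<omega>) * Y0 i \<omega>"
  defines "tau \<equiv> \<lambda>x. mu1 x - mu0 x"
  defines "thr \<equiv> THR_U mu0 mu1"
  defines "Ic \<equiv> \<lambda>n k. {0..<K * n} - I n k"
  defines "D \<equiv> \<lambda>n k \<omega>. restrict (\<lambda>i. (X i \<omega>, A i \<omega>, Yobs i \<omega>)) (Ic n k)"
  (* i.i.d. superpopulation sample *)
  assumes P: "prob_space M"
  assumes meas: "\<And>i. (\<lambda>\<omega>. (X i \<omega>, A i \<omega>, Y0 i \<omega>, Y1 i \<omega>))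
                   \<in> measurable M (SX \<Otimes>\<^sub>M borel \<Otimes>\<^sub>M borel \<Otimes>\<^sub>M borel)"
  assumes indep: "prob_space.indep_vars M (\<lambda>_. SX \<Otimes>\<^sub>M borel \<Otimes>\<^sub>M borel \<Otimes>\<^sub>M borel)
                   (\<lambda>i \<omega>. (X i \<omega>, A i \<omega>, Y0 i \<omega>, Y1 i \<omega>)) UNIV"
  assumes ident: "\<And>i. distr M (SX \<Otimes>\<^sub>M borel \<Otimes>\<^sub>M borel \<Otimes>\<^sub>M borel) (\<lambda>\<omega>. (X i \<omega>, A i \<omega>, Y0 i \<omega>, Y1 i \<omega>))
                     = distr M (SX \<Otimes>\<^sub>M borel \<Otimes>\<^sub>M borel \<Otimes>\<^sub>M borel) (\<lambda>\<omega>. (X 0 \<omega>, A 0 \<omega>, Y0 0 \<omega>, Y1 0 \<omega>))"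
  assumes binary: "\<And>i \<omega>. \<omega> \<in> space M \<Longrightarrow> A i \<omega> \<in> {0, 1} \<and> Y0 i \<omega> \<in> {0, 1} \<and> Y1 i \<omega> \<in> {0, 1}"
  (* mu_a(x) = E(Y | A = a, X = x) *)
  assumes mu0: "is_cond_mean M SX (X 0) (A 0) (Yobs 0) 0 mu0"
  assumes mu1: "is_cond_mean M SX (X 0) (A 0) (Yobs 0) 1 mu1"
  (* Assumption 1 *)
  assumes A1i: "cond_indep M (\<lambda>\<omega>. (Y0 0 \<omega>, Y1 0 \<omega>)) (borel \<Otimes>\<^sub>M borel) (A 0) borel (X 0) SX"
  assumes A1ii: "0 < eps" "eps < 1/2"
    "\<exists>e. e \<in> borel_measurable SX \<and>
         (AE \<omega> in M. real_cond_exp M (gen_sigma M (X 0) SX) (indicator {\<omega>. A 0 \<omega> = 1}) \<omega> = e (X 0 \<omega>)) \<and>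
         (\<forall>x\<in>space SX. eps < e x \<and> e x < 1 - eps)"
  (* beta-dagger solves Psi = 0 *)
  assumes root: "Psi M (X 0) tau thr lam betad = 0"
  (* Condition 1 *)
  assumes C1i: "\<exists>\<delta>>0. \<exists>Psi'. (\<forall>\<beta>\<in>ball betad \<delta>.
                    (Psi M (X 0) tau thr lam has_real_derivative Psi' \<beta>) (at \<beta>))
                 \<and> continuous_on (ball betad \<delta>) Psi' \<and> \<bar>Psi' betad\<bar> \<ge> c"
  assumes C1ii: "0 < betad" "betad < Mb"
  assumes C1iii: "c > 0"
  (* Condition 2 *)
  assumes C2: "\<And>\<beta>. \<exists>f B. distributed M lborel (\<lambda>\<omega>. tau (X 0 \<omega>) - \<beta> * thr (X 0 \<omega>)) f
                         \<and> (\<forall>t. f t \<le> ennreal B)"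
  (* cross-fitting partition of {0..<N}, N = K n, into K folds of size n *)
  assumes K: "0 < K" and k: "k < K"
  assumes part: "\<And>n. (\<Union>j<K. I n j) = {0..<K * n}"
    "\<And>n j. j < K \<Longrightarrow> card (I n j) = n"
    "\<And>n j j'. j < K \<Longrightarrow> j' < K \<Longrightarrow> j \<noteq> j' \<Longrightarrow> I n j \<inter> I n j' = {}"
  (* the estimators are measurable functions of the out-of-fold observations only *)
  assumes est_meas:
    "\<And>n j. j < K \<Longrightarrow> (\<lambda>(d, x). tauh n j d x)
       \<in> borel_measurable (PiM (Ic n j) (\<lambda>_. SX \<Otimes>\<^sub>M borel \<Otimes>\<^sub>M borel) \<Otimes>\<^sub>M SX)"
    "\<And>n j. j < K \<Longrightarrow> (\<lambda>(d, x). thrh n j d x)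
       \<in> borel_measurable (PiM (Ic n j) (\<lambda>_. SX \<Otimes>\<^sub>M borel \<Otimes>\<^sub>M borel) \<Otimes>\<^sub>M SX)"
  (* uniform consistency (in outer probability) *)
  assumes cons_tau: "\<And>j \<epsilon>. j < K \<Longrightarrow> \<epsilon> > 0 \<Longrightarrow> outer_prob_to_zero M
      (\<lambda>n. {\<omega>. \<exists>x\<in>space SX. \<bar>tauh n j (D n j \<omega>) x - tau x\<bar> > \<epsilon>})"
  assumes cons_thr: "\<And>j \<epsilon>. j < K \<Longrightarrow> \<epsilon> > 0 \<Longrightarrow> outer_prob_to_zero M
      (\<lambda>n. {\<omega>. \<exists>x\<in>space SX. \<bar>thrh n j (D n j \<omega>) x - thr x\<bar> > \<epsilon>})"
  (* beta-hat^(k) in [0, M] solves the fold-k estimating equation *)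
  assumes solves: "\<And>n \<omega>. n \<ge> 1 \<Longrightarrow> \<omega> \<in> space M \<Longrightarrow>
      betah n k \<omega> \<in> {0..Mb} \<and>
      (1 / real (card (I n k))) *
        (\<Sum>i\<in>I n k. thrh n k (D n k \<omega>) (X i \<omega>) *
           (if tauh n k (D n k \<omega>) (X i \<omega>) - betah n k \<omega> * thrh n k (D n k \<omega>) (X i \<omega>) > 0
            then 1 else 0)) - lam = 0"
  shows "\<forall>\<epsilon>>0. outer_prob_to_zero M (\<lambda>n. {\<omega>. \<bar>betah n k \<omega> - betad\<bar> > \<epsilon>})"
proof (intro allI impI)
  fix \<epsilon> :: real assume eps_pos: "\<epsilon> > 0"
  interpret prob_space M by (rule P)
  define tup where "tup = (\<lambda>i \<omega>. (X i \<omega>, A i \<omega>, Y0 i \<omega>, Y1 i \<omega>))"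
  have tupm: "tup i \<in> measurable M (SX \<Otimes>\<^sub>M borel \<Otimes>\<^sub>M borel \<Otimes>\<^sub>M borel)" for i
    using meas[of i] unfolding tup_def .
  have Xm: "X i \<in> measurable M SX" for i
    using measurable_compose[OF tupm[of i] measurable_fst] by (simp add: tup_def)
  have Am: "A i \<in> borel_measurable M" for i
    using measurable_compose[OF tupm[of i] measurable_compose[OF measurable_snd measurable_fst]]
    by (simp add: tup_def)
  have Y0m: "Y0 i \<in> borel_measurable M" for i
    using measurable_compose[OF tupm[of i] measurable_compose[OF measurable_snd measurable_compose[OF measurable_snd measurable_fst]]]
    by (simp add: tup_def)
  have Y1m: "Y1 i \<in> borel_measurable M" for i
    using measurable_compose[OF tupm[of i] measurable_compose[OF measurable_snd measurable_compose[OF measurable_snd measurable_snd]]]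
    by (simp add: tup_def)
  have Yobsm: "Yobs 0 \<in> borel_measurable M"
    unfolding Yobs_def
    by (intro borel_measurable_add borel_measurable_times borel_measurable_diff borel_measurable_const Am Y0m Y1m)
  have bin0: "A 0 \<omega> \<in> {0,1} \<and> Yobs 0 \<omega> \<in> {0,1}" if "\<omega> \<in> space M" for \<omega>
  proof -
    have "A 0 \<omega> \<in> {0, 1} \<and> Y0 0 \<omega> \<in> {0, 1} \<and> Y1 0 \<omega> \<in> {0, 1}" using binary[OF that] .
    then show ?thesis unfolding Yobs_def by auto
  qed
  have mu0m: "mu0 \<in> borel_measurable SX" using mu0 unfolding is_cond_mean_def by blast
  have mu1m: "mu1 \<in> borel_measurable SX" using mu1 unfolding is_cond_mean_def by blast
  have thr_eq: "thr = (\<lambda>x. min (mu0 x) (1 - mu1 x))"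
    unfolding thr_def THR_U_def by (rule ext) simp
  have thrm: "thr \<in> borel_measurable SX"
    unfolding thr_eq using mu0m mu1m by measurable
  have taum: "tau \<in> borel_measurable SX"
    unfolding tau_def using mu0m mu1m by measurable
  have z01: "(0::real) \<in> {0,1}" "(1::real) \<in> {0,1}" by simp_all
  have m0: "AE \<omega> in M. mu0 (X 0 \<omega>) \<in> {0..1}"
    by (rule cond_mean_01[OF P Xm[of 0] Am[of 0] Yobsm bin0 mu0 z01(1) A1ii])
  have m1: "AE \<omega> in M. mu1 (X 0 \<omega>) \<in> {0..1}"
    by (rule cond_mean_01[OF P Xm[of 0] Am[of 0] Yobsm bin0 mu1 z01(2) A1ii])
  have thr01_0: "AE \<omega> in M. thr (X 0 \<omega>) \<in> {0..1}"
    using m0 m1 by eventually_elim (auto simp: thr_eq)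
  have Xdistr: "distr M SX (X i) = distr M SX (X 0)" for i
  proof -
    have e1: "distr M SX (X j) = distr (distr M (SX \<Otimes>\<^sub>M borel \<Otimes>\<^sub>M borel \<Otimes>\<^sub>M borel) (tup j)) SX fst" for j
      using distr_distr[OF measurable_fst tupm[of j]] by (simp add: comp_def tup_def)
    show ?thesis unfolding e1 using ident[of i] unfolding tup_def by simp
  qed
  have indX: "indep_vars (\<lambda>_. SX) X UNIV"
    using indep_vars_compose2[OF indep, where Y="\<lambda>_. fst" and N="\<lambda>_. SX"] by simp
  have thr01: "AE \<omega> in M. thr (X i \<omega>) \<in> {0..1}" for i
  proof -
    have sm: "{x \<in> space SX. thr x \<in> {0..1}} \<in> sets SX" using thrm by measurable
    have "AE x in distr M SX (X 0). thr x \<in> {0..1}"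
      using thr01_0 by (subst AE_distr_iff[OF Xm sm])
    then have "AE x in distr M SX (X i). thr x \<in> {0..1}" by (simp only: Xdistr[of i])
    then show ?thesis by (subst (asm) AE_distr_iff[OF Xm sm])
  qed
  have "AE \<omega> in M. \<forall>i. thr (X i \<omega>) \<in> {0..1}"
    using thr01 by (simp add: AE_all_countable)
  then obtain N0 where N0: "{\<omega> \<in> space M. \<not> (\<forall>i. thr (X i \<omega>) \<in> {0..1})} \<subseteq> N0"
    "emeasure M N0 = 0" "N0 \<in> sets M"
    by (rule AE_E)
  have mN0: "measure M N0 = 0" using N0(2) by (simp add: measure_def)

  define tp where "tp = (\<lambda>x. max 0 (min 1 (thr x)))"
  define gf where "gf = (\<lambda>\<beta> r x. tp x * (if tau x - \<beta> * tp x > r then 1 else (0::real)))"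
  have tpm: "tp \<in> borel_measurable SX" unfolding tp_def using thrm by measurable
  have gfm: "gf \<beta> r \<in> borel_measurable SX" for \<beta> r
    unfolding gf_def using tpm taum by measurable
  have gf01: "gf \<beta> r x \<in> {0..1}" for \<beta> r x
    unfolding gf_def tp_def by auto
  have gfXm: "(\<lambda>\<omega>. gf \<beta> r (X i \<omega>)) \<in> borel_measurable M" for \<beta> r i
    using measurable_compose[OF Xm gfm] .
  have intg: "integrable M (\<lambda>\<omega>. gf \<beta> r (X i \<omega>))" for \<beta> r i
  proof (rule integrable_const_bound[where B=1, OF AE_I2 gfXm])
    fix \<omega> show "norm (gf \<beta> r (X i \<omega>)) \<le> 1" using gf01[of \<beta> r "X i \<omega>"] by auto
  qed
  define \<Psi>0 where "\<Psi>0 = Psi M (X 0) tau thr lam"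
  have Psi_eq: "\<Psi>0 \<beta> = (\<integral>\<omega>. gf \<beta> 0 (X 0 \<omega>) \<partial>M) - lam" for \<beta>
  proof -
    have "(\<integral>\<omega>. thr (X 0 \<omega>) * (if tau (X 0 \<omega>) - \<beta> * thr (X 0 \<omega>) > 0 then 1 else 0) \<partial>M)
        = (\<integral>\<omega>. gf \<beta> 0 (X 0 \<omega>) \<partial>M)"
    proof (rule integral_cong_AE)
      show "(\<lambda>\<omega>. thr (X 0 \<omega>) * (if tau (X 0 \<omega>) - \<beta> * thr (X 0 \<omega>) > 0 then 1 else (0::real))) \<in> borel_measurable M"
        using measurable_compose[OF Xm thrm] measurable_compose[OF Xm taum] by measurable
      show "(\<lambda>\<omega>. gf \<beta> 0 (X 0 \<omega>)) \<in> borel_measurable M" by (rule gfXm)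
      show "AE \<omega> in M. thr (X 0 \<omega>) * (if tau (X 0 \<omega>) - \<beta> * thr (X 0 \<omega>) > 0 then 1 else 0) = gf \<beta> 0 (X 0 \<omega>)"
        using thr01_0 by eventually_elim (auto simp: gf_def tp_def)
    qed
    then show ?thesis unfolding \<Psi>0_def Psi_def by simp
  qed
  have mono: "\<Psi>0 y \<le> \<Psi>0 x" if "x \<le> y" for x y
  proof -
    have "(\<integral>\<omega>. gf y 0 (X 0 \<omega>) \<partial>M) \<le> (\<integral>\<omega>. gf x 0 (X 0 \<omega>) \<partial>M)"
    proof (rule integral_mono[OF intg intg])
      fix \<omega>
      have t0: "0 \<le> tp (X 0 \<omega>)" unfolding tp_def by simp
      have "x * tp (X 0 \<omega>) \<le> y * tp (X 0 \<omega>)" using that t0 by (rule mult_right_mono)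
      then show "gf y 0 (X 0 \<omega>) \<le> gf x 0 (X 0 \<omega>)" unfolding gf_def using t0 by auto
    qed
    then show ?thesis unfolding Psi_eq by simp
  qed
  obtain \<delta> Psi' where \<delta>: "\<delta> > 0" and der: "\<forall>\<beta>\<in>ball betad \<delta>. (\<Psi>0 has_real_derivative Psi' \<beta>) (at \<beta>)"
    and cge: "\<bar>Psi' betad\<bar> \<ge> c"
    using C1i unfolding \<Psi>0_def by blast
  have derb: "(\<Psi>0 has_real_derivative Psi' betad) (at betad)" using der \<delta> by simp
  obtain d where d: "d > 0" "\<forall>h>0. h < d \<longrightarrow> \<Psi>0 (betad + h) < \<Psi>0 betad \<and> \<Psi>0 betad < \<Psi>0 (betad - h)"
    using deriv_sign[of \<Psi>0, OF mono derb C1iii cge] by blast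
  have root0: "\<Psi>0 betad = 0" using root unfolding \<Psi>0_def .
  define h where "h = min \<epsilon> (d/2)"
  have h: "h > 0" "h < d" "h \<le> \<epsilon>" unfolding h_def using eps_pos d by auto
  define bp where "bp = betad + h"
  define bm where "bm = betad - h"
  have Pbp: "\<Psi>0 bp < 0" using d(2) h root0 unfolding bp_def by auto
  have Pbm: "\<Psi>0 bm > 0" using d(2) h root0 unfolding bm_def by auto
  obtain fp Bp where fp: "distributed M lborel (\<lambda>\<omega>. tau (X 0 \<omega>) - bp * thr (X 0 \<omega>)) fp" "\<forall>t. fp t \<le> ennreal Bp"
    using C2[of bp] by blast
  obtain fm Bm where fm: "distributed M lborel (\<lambda>\<omega>. tau (X 0 \<omega>) - bm * thr (X 0 \<omega>)) fm" "\<forall>t. fm t \<le> ennreal Bm"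
    using C2[of bm] by blast
  define Bb where "Bb = max Bp 0 + max Bm 0 + 1"
  have Bb: "Bb \<ge> 1" "max Bp 0 \<le> Bb" "max Bm 0 \<le> Bb" unfolding Bb_def by auto
  define q where "q = min (- \<Psi>0 bp) (\<Psi>0 bm)"
  have q: "q > 0" "\<Psi>0 bp \<le> - q" "q \<le> \<Psi>0 bm" unfolding q_def using Pbp Pbm by auto
  have Mb0: "Mb > 0" using C1ii by linarith
  define K0 where "K0 = (1 + Mb) * Bb"
  have K0: "K0 \<ge> 1" unfolding K0_def using mult_mono[of 1 "1+Mb" 1 Bb] Mb0 Bb by simp
  define \<eta> where "\<eta> = q / (4 * K0)"
  define \<rho> where "\<rho> = \<eta> * (1 + Mb)"
  define \<alpha> where "\<alpha> = q / 4"
  have eta0: "\<eta> > 0" unfolding \<eta>_def using q K0 by simp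
  have rho0: "\<rho> > 0" unfolding \<rho>_def using eta0 Mb0 by simp
  have etaK: "\<eta> * K0 = q / 4" unfolding \<eta>_def using K0 by simp
  have rhoB: "\<rho> * Bb = q / 4"
  proof -
    have "\<rho> * Bb = \<eta> * K0" unfolding \<rho>_def K0_def by (simp add: algebra_simps)
    then show ?thesis using etaK by simp
  qed
  have etaq: "\<eta> \<le> q / 4"
  proof -
    have "\<eta> * 1 \<le> \<eta> * K0" using eta0 K0 by (intro mult_left_mono) auto
    then show ?thesis using etaK by simp
  qed
  have al0: "\<alpha> > 0" unfolding \<alpha>_def using q by simp

  have gap: "(\<integral>\<omega>. gf \<beta> r1 (X 0 \<omega>) \<partial>M) - (\<integral>\<omega>. gf \<beta> r2 (X 0 \<omega>) \<partial>M)
      \<le> measure M {\<omega>\<in>space M. r1 < tau (X 0 \<omega>) - \<beta> * thr (X 0 \<omega>) \<and> tau (X 0 \<omega>) - \<beta> * thr (X 0 \<omega>) \<le> r2}"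
    if r12: "r1 \<le> r2" for \<beta> r1 r2
  proof -
    define S where "S = {\<omega>\<in>space M. r1 < tau (X 0 \<omega>) - \<beta> * thr (X 0 \<omega>) \<and> tau (X 0 \<omega>) - \<beta> * thr (X 0 \<omega>) \<le> r2}"
    have Sm: "S \<in> sets M" unfolding S_def
      using measurable_compose[OF Xm thrm] measurable_compose[OF Xm taum] by measurable
    have intS: "integrable M (indicator S :: 'w \<Rightarrow> real)"
      by (rule integrable_const_bound[where B=1, OF AE_I2 borel_measurable_indicator[OF Sm]]) (simp add: indicator_def)
    have "(\<integral>\<omega>. gf \<beta> r1 (X 0 \<omega>) \<partial>M) - (\<integral>\<omega>. gf \<beta> r2 (X 0 \<omega>) \<partial>M)
        = (\<integral>\<omega>. gf \<beta> r1 (X 0 \<omega>) - gf \<beta> r2 (X 0 \<omega>) \<partial>M)"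
      by (rule Bochner_Integration.integral_diff[symmetric, OF intg intg])
    also have "\<dots> \<le> (\<integral>\<omega>. indicator S \<omega> \<partial>M)"
    proof (rule integral_mono_AE)
      show "integrable M (\<lambda>\<omega>. gf \<beta> r1 (X 0 \<omega>) - gf \<beta> r2 (X 0 \<omega>))" using intg by auto
      show "integrable M (\<lambda>\<omega>. indicator S \<omega> :: real)" using intS by simp
      show "AE \<omega> in M. gf \<beta> r1 (X 0 \<omega>) - gf \<beta> r2 (X 0 \<omega>) \<le> indicator S \<omega>"
        using thr01_0
      proof (rule AE_mp[OF _ AE_I2], intro impI)
        fix \<omega> assume om: "\<omega> \<in> space M" and t01: "thr (X 0 \<omega>) \<in> {0..1}"
        have tpe: "tp (X 0 \<omega>) = thr (X 0 \<omega>)" unfolding tp_def using t01 by auto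
        show "gf \<beta> r1 (X 0 \<omega>) - gf \<beta> r2 (X 0 \<omega>) \<le> indicator S \<omega>"
          unfolding gf_def tpe S_def using t01 om r12 by (auto simp: indicator_def)
      qed
    qed
    also have "\<dots> = measure M S" using Sm by (simp add: Int_absorb2 sets.sets_into_space)
    finally show ?thesis unfolding S_def .
  qed
  define \<mu>p where "\<mu>p = (\<integral>\<omega>. gf bp (- \<rho>) (X 0 \<omega>) \<partial>M)"
  define \<mu>m where "\<mu>m = (\<integral>\<omega>. gf bm \<rho> (X 0 \<omega>) \<partial>M)"
  have mup: "\<mu>p \<le> \<Psi>0 bp + lam + q / 4"
  proof -
    have "\<mu>p - (\<integral>\<omega>. gf bp 0 (X 0 \<omega>) \<partial>M)
       \<le> measure M {\<omega>\<in>space M. - \<rho> < tau (X 0 \<omega>) - bp * thr (X 0 \<omega>) \<and> tau (X 0 \<omega>) - bp * thr (X 0 \<omega>) \<le> 0}"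
      unfolding \<mu>p_def by (rule gap) (use rho0 in simp)
    also have "\<dots> \<le> max Bp 0 * (0 - - \<rho>)"
      by (rule density_interval_bound[OF P fp]) (use rho0 in simp)
    also have "\<dots> \<le> Bb * \<rho>" using Bb rho0 by (simp add: mult_right_mono)
    finally show ?thesis using rhoB Psi_eq[of bp] by (simp add: algebra_simps)
  qed
  have mum: "\<Psi>0 bm + lam - q / 4 \<le> \<mu>m"
  proof -
    have "(\<integral>\<omega>. gf bm 0 (X 0 \<omega>) \<partial>M) - \<mu>m
       \<le> measure M {\<omega>\<in>space M. 0 < tau (X 0 \<omega>) - bm * thr (X 0 \<omega>) \<and> tau (X 0 \<omega>) - bm * thr (X 0 \<omega>) \<le> \<rho>}"
      unfolding \<mu>m_def by (rule gap) (use rho0 in simp)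
    also have "\<dots> \<le> max Bm 0 * (\<rho> - 0)"
      by (rule density_interval_bound[OF P fm]) (use rho0 in simp)
    also have "\<dots> \<le> Bb * \<rho>" using Bb rho0 by (simp add: mult_right_mono)
    finally show ?thesis using rhoB Psi_eq[of bm] by (simp add: algebra_simps)
  qed
  have cardI: "card (I n k) = n" if "n \<ge> 1" for n using part(2)[OF k] .
  show "outer_prob_to_zero M (\<lambda>n. {\<omega>. \<bar>betah n k \<omega> - betad\<bar> > \<epsilon>})"
    unfolding outer_prob_to_zero_def
  proof (intro allI impI)
    fix \<gamma> :: real assume g0: "\<gamma> > 0"
    have g5: "\<gamma> / 5 > 0" using g0 by simp
    have ev1: "eventually (\<lambda>n. \<exists>E\<in>sets M. {\<omega>. \<exists>x\<in>space SX. \<bar>tauh n k (D n k \<omega>) x - tau x\<bar> > \<eta>} \<inter> space M \<subseteq> E \<and> measure M E < \<gamma> / 5) sequentially"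
      using cons_tau[OF k eta0] g5 unfolding outer_prob_to_zero_def by blast
    have ev2: "eventually (\<lambda>n. \<exists>E\<in>sets M. {\<omega>. \<exists>x\<in>space SX. \<bar>thrh n k (D n k \<omega>) x - thr x\<bar> > \<eta>} \<inter> space M \<subseteq> E \<and> measure M E < \<gamma> / 5) sequentially"
      using cons_thr[OF k eta0] g5 unfolding outer_prob_to_zero_def by blast
    have ev3: "eventually (\<lambda>n. measure M {\<omega>\<in>space M. (\<Sum>i\<in>I n k. gf bp (- \<rho>) (X i \<omega>)) / real n \<ge> \<mu>p + \<alpha>} < \<gamma> / 5
              \<and> measure M {\<omega>\<in>space M. (\<Sum>i\<in>I n k. gf bp (- \<rho>) (X i \<omega>)) / real n \<le> \<mu>p - \<alpha>} < \<gamma> / 5) sequentially"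
      unfolding \<mu>p_def by (rule hoeff_wlln[OF P Xm indX Xdistr gfm _ cardI al0 g5]) (rule gf01)
    have ev4: "eventually (\<lambda>n. measure M {\<omega>\<in>space M. (\<Sum>i\<in>I n k. gf bm \<rho> (X i \<omega>)) / real n \<ge> \<mu>m + \<alpha>} < \<gamma> / 5
              \<and> measure M {\<omega>\<in>space M. (\<Sum>i\<in>I n k. gf bm \<rho> (X i \<omega>)) / real n \<le> \<mu>m - \<alpha>} < \<gamma> / 5) sequentially"
      unfolding \<mu>m_def by (rule hoeff_wlln[OF P Xm indX Xdistr gfm _ cardI al0 g5]) (rule gf01)
    have ev5: "eventually (\<lambda>n. n \<ge> (1::nat)) sequentially" by (rule eventually_ge_at_top)
    show "eventually (\<lambda>n. \<exists>E\<in>sets M. {\<omega>. \<bar>betah n k \<omega> - betad\<bar> > \<epsilon>} \<inter> space M \<subseteq> E \<and> measure M E < \<gamma>) sequentially"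
      using ev1 ev2 ev3 ev4 ev5
    proof eventually_elim
      case (elim n)
      obtain E1 where E1: "E1 \<in> sets M" "{\<omega>. \<exists>x\<in>space SX. \<bar>tauh n k (D n k \<omega>) x - tau x\<bar> > \<eta>} \<inter> space M \<subseteq> E1" "measure M E1 < \<gamma> / 5"
        using elim(1) by blast
      obtain E2 where E2: "E2 \<in> sets M" "{\<omega>. \<exists>x\<in>space SX. \<bar>thrh n k (D n k \<omega>) x - thr x\<bar> > \<eta>} \<inter> space M \<subseteq> E2" "measure M E2 < \<gamma> / 5"
        using elim(2) by blast
      define U where "U = {\<omega>\<in>space M. (\<Sum>i\<in>I n k. gf bp (- \<rho>) (X i \<omega>)) / real n \<ge> \<mu>p + \<alpha>}"
      define L where "L = {\<omega>\<in>space M. (\<Sum>i\<in>I n k. gf bm \<rho> (X i \<omega>)) / real n \<le> \<mu>m - \<alpha>}"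
      have mU: "measure M U < \<gamma> / 5" using elim(3) unfolding U_def by blast
      have mL: "measure M L < \<gamma> / 5" using elim(4) unfolding L_def by blast
      have n1: "n \<ge> 1" using elim(5) .
      have summ: "(\<lambda>\<omega>. (\<Sum>i\<in>I n k. gf b r (X i \<omega>)) / real n) \<in> borel_measurable M" for b r
        by (intro borel_measurable_divide borel_measurable_sum borel_measurable_const gfXm)
      have Um: "U \<in> sets M" unfolding U_def using summ[of bp "- \<rho>"] by measurable
      have Lm: "L \<in> sets M" unfolding L_def using summ[of bm \<rho>] by measurable
      define E where "E = E1 \<union> E2 \<union> U \<union> L \<union> N0"
      have Em: "E \<in> sets M" unfolding E_def using E1(1) E2(1) Um Lm N0(3) by auto
      have "measure M E \<le> measure M E1 + measure M E2 + measure M U + measure M L + measure M N0"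
      proof -
        have "measure M E \<le> measure M (E1 \<union> E2 \<union> U \<union> L) + measure M N0"
          unfolding E_def using E1(1) E2(1) Um Lm N0(3) by (intro measure_subadditive) (auto simp: emeasure_finite)
        also have "measure M (E1 \<union> E2 \<union> U \<union> L) \<le> measure M (E1 \<union> E2 \<union> U) + measure M L"
          using E1(1) E2(1) Um Lm by (intro measure_subadditive) (auto simp: emeasure_finite)
        also have "measure M (E1 \<union> E2 \<union> U) \<le> measure M (E1 \<union> E2) + measure M U"
          using E1(1) E2(1) Um by (intro measure_subadditive) (auto simp: emeasure_finite)
        also have "measure M (E1 \<union> E2) \<le> measure M E1 + measure M E2"
          using E1(1) E2(1) by (intro measure_subadditive) (auto simp: emeasure_finite)
        finally show ?thesis by simp
      qed
      then have mE: "measure M E < \<gamma>" using E1(3) E2(3) mU mL mN0 g0 by linarith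
      have sub: "{\<omega>. \<bar>betah n k \<omega> - betad\<bar> > \<epsilon>} \<inter> space M \<subseteq> E"
      proof
        fix \<omega> assume "\<omega> \<in> {\<omega>. \<bar>betah n k \<omega> - betad\<bar> > \<epsilon>} \<inter> space M"
        then have om: "\<omega> \<in> space M" and far: "\<bar>betah n k \<omega> - betad\<bar> > \<epsilon>" by auto
        show "\<omega> \<in> E"
        proof (rule ccontr)
          assume nE: "\<omega> \<notin> E"
          have tauok: "\<bar>tauh n k (D n k \<omega>) x - tau x\<bar> \<le> \<eta>" if "x \<in> space SX" for x
            using nE E1(2) om that unfolding E_def by force
          have throk: "\<bar>thrh n k (D n k \<omega>) x - thr x\<bar> \<le> \<eta>" if "x \<in> space SX" for x
            using nE E2(2) om that unfolding E_def by force
          have t01: "thr (X i \<omega>) \<in> {0..1}" for i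
            using nE N0(1) om unfolding E_def by blast
          have notU: "(\<Sum>i\<in>I n k. gf bp (- \<rho>) (X i \<omega>)) / real n < \<mu>p + \<alpha>"
            using nE om unfolding E_def U_def by auto
          have notL: "(\<Sum>i\<in>I n k. gf bm \<rho> (X i \<omega>)) / real n > \<mu>m - \<alpha>"
            using nE om unfolding E_def L_def by auto
          have Xs: "X i \<omega> \<in> space SX" for i using measurable_space[OF Xm om] .
          have tpe: "tp (X i \<omega>) = thr (X i \<omega>)" for i unfolding tp_def using t01[of i] by auto
          have sol: "betah n k \<omega> \<in> {0..Mb}"
            "(1 / real (card (I n k))) * (\<Sum>i\<in>I n k. thrh n k (D n k \<omega>) (X i \<omega>) *
               (if tauh n k (D n k \<omega>) (X i \<omega>) - betah n k \<omega> * thrh n k (D n k \<omega>) (X i \<omega>) > 0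
                then 1 else 0)) - lam = 0"
            using solves[OF n1 om] by auto
          define b where "b = betah n k \<omega>"
          define S where "S = (\<Sum>i\<in>I n k. thrh n k (D n k \<omega>) (X i \<omega>) *
               (if tauh n k (D n k \<omega>) (X i \<omega>) - b * thrh n k (D n k \<omega>) (X i \<omega>) > 0 then 1 else 0))"
          have npos: "real n > 0" using n1 by simp
          have Seq: "S / real n = lam" using sol(2) unfolding S_def b_def cardI[OF n1] by simp
          have b0M: "0 \<le> b" "b \<le> Mb" using sol(1) unfolding b_def by auto
          have "\<not> b \<ge> bp"
          proof
            assume bge: "b \<ge> bp"
            have bp0: "0 \<le> bp" unfolding bp_def using C1ii h by simp
            have "S \<le> (\<Sum>i\<in>I n k. gf bp (- \<rho>) (X i \<omega>) + \<eta>)"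
              unfolding S_def
            proof (rule sum_mono)
              fix i assume "i \<in> I n k"
              show "thrh n k (D n k \<omega>) (X i \<omega>) * (if tauh n k (D n k \<omega>) (X i \<omega>) - b * thrh n k (D n k \<omega>) (X i \<omega>) > 0 then 1 else 0)
                  \<le> gf bp (- \<rho>) (X i \<omega>) + \<eta>"
                unfolding gf_def tpe \<rho>_def
                by (rule term_upper[OF tauok[OF Xs] throk[OF Xs] _ bp0 bge b0M(2)]) (use t01[of i] in simp)
            qed
            also have "\<dots> = (\<Sum>i\<in>I n k. gf bp (- \<rho>) (X i \<omega>)) + real n * \<eta>"
              by (simp add: sum.distrib cardI[OF n1])
            finally have "S / real n \<le> ((\<Sum>i\<in>I n k. gf bp (- \<rho>) (X i \<omega>)) + real n * \<eta>) / real n"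
              using npos by (intro divide_right_mono) auto
            also have "\<dots> = (\<Sum>i\<in>I n k. gf bp (- \<rho>) (X i \<omega>)) / real n + \<eta>"
              using npos by (simp add: add_divide_distrib)
            finally have "S / real n \<le> (\<Sum>i\<in>I n k. gf bp (- \<rho>) (X i \<omega>)) / real n + \<eta>" .
            then have "lam < \<mu>p + \<alpha> + \<eta>" using Seq notU by linarith
            then show False using mup q etaq unfolding \<alpha>_def by linarith
          qed
          moreover have "\<not> b \<le> bm"
          proof
            assume ble: "b \<le> bm"
            have "(\<Sum>i\<in>I n k. gf bm \<rho> (X i \<omega>) - \<eta>) \<le> S"
              unfolding S_def
            proof (rule sum_mono)
              fix i assume "i \<in> I n k"
              show "gf bm \<rho> (X i \<omega>) - \<eta> \<le> thrh n k (D n k \<omega>) (X i \<omega>) * (if tauh n k (D n k \<omega>) (X i \<omega>) - b * thrh n k (D n k \<omega>) (X i \<omega>) > 0 then 1 else 0)"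
                unfolding gf_def tpe \<rho>_def
                by (rule term_lower[OF tauok[OF Xs] throk[OF Xs] _ b0M(1) ble b0M(2)]) (use t01[of i] in simp)
            qed
            moreover have "(\<Sum>i\<in>I n k. gf bm \<rho> (X i \<omega>) - \<eta>) = (\<Sum>i\<in>I n k. gf bm \<rho> (X i \<omega>)) - real n * \<eta>"
              by (simp add: sum_subtractf cardI[OF n1])
            ultimately have "((\<Sum>i\<in>I n k. gf bm \<rho> (X i \<omega>)) - real n * \<eta>) / real n \<le> S / real n"
              using npos by (intro divide_right_mono) auto
            moreover have "((\<Sum>i\<in>I n k. gf bm \<rho> (X i \<omega>)) - real n * \<eta>) / real n = (\<Sum>i\<in>I n k. gf bm \<rho> (X i \<omega>)) / real n - \<eta>"
              using npos by (simp add: diff_divide_distrib)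
            ultimately have "(\<Sum>i\<in>I n k. gf bm \<rho> (X i \<omega>)) / real n - \<eta> \<le> S / real n" by simp
            then have "\<mu>m - \<alpha> - \<eta> < lam" using Seq notL by linarith
            then show False using mum q etaq unfolding \<alpha>_def by linarith
          qed
          ultimately have "bm < b" "b < bp" by auto
          then have "\<bar>b - betad\<bar> < h" unfolding bp_def bm_def by auto
          then show False using far h unfolding b_def by linarith
        qed
      qed
      show ?case using Em sub mE by blast
    qed
  qed
qed

end
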